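(* Let $G$ be a finite simple graph, and let $C_1$, $C_2$, $C_3$ be nonempty connected induced subgraphs of $G$ such that for every $i\neq j$ the distance in $G$ between $C_i$ and $C_j$ is at least $2$. Let $k=\min\{\mathrm{lmw}(C_1),\mathrm{lmw}(C_2),\mathrm{lmw}(C_3)\}$. Suppose that for each pair $\{i,j\}\subseteq\{1,2,3\}$ with $i\neq j$, letting $l$ be the third index, there exists a path $P_{i,j}$ in $G$ from a vertex of $C_i$ to a vertex of $C_j$ that does not intersect the closed neighborhood $N_G[V(C_l)]$. Then $\mathrm{lmw}(G)>k$.
   Context: All graphs are finite and simple. For $S\subseteq V(G)$, $N_G[S]=\bigcup_{v\in S}(N_G(v)\cup\{v\})$. The distance between two subgraphs $H,H'$ of $G$ is the minimum distance in $G$ between a vertex of $H$ and a vertex of $H'$. For disjoint $S,T\subseteq V(G)$, $G[S,T]$ denotes the bipartite graph on $S\cup T$ whose edges are exactly the edges of $G$ with one endpoint in $S$ and the other in $T$. $\mathrm{mim}(H)$ is the maximum number of edges in an induced matching of $H$. A linear layout of an $n$-vertex graph $G$ is a bijection $\sigma:V(G)\to\{1,\dots,n\}$; write $v_i=\sigma^{-1}(i)$ and $V_i^\sigma=\{v_1,\dots,v_i\}$, $\overline{V_i^\sigma}=V(G)\setminus V_i^\sigma$. The MIM-width of $G$ under $\sigma$ is $\mathrm{mw}(\sigma,G)=\max_{1\le i<n}\mathrm{mim}(G[V_i^\sigma,\overline{V_i^\sigma}])$ (equal to $0$ if $n\le 1$). The linear MIM-width $\mathrm{lmw}(G)$ is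 the minimum of $\mathrm{mw}(\sigma,G)$ over all linear layouts $\sigma$ of $G$. *)

theory Defs
  imports Main "HOL-Library.Extended_Nat"
begin

definition simple_graph :: "'a set \<Rightarrow> ('a \<Rightarrow> 'a \<Rightarrow> bool) \<Rightarrow> bool" where
  "simple_graph V E \<longleftrightarrow> finite V \<and> (\<forall>u v. E u v \<longrightarrow> u \<in> V \<and> v \<in> V)
     \<and> (\<forall>u v. E u v \<longrightarrow> E v u) \<and> (\<forall>u. \<not> E u u)"

definition induced :: "'a set \<Rightarrow> ('a \<Rightarrow> 'a \<Rightarrow> bool) \<Rightarrow> ('a \<Rightarrow> 'a \<Rightarrow> bool)" where
  "induced C E = (\<lambda>u v. u \<in> C \<and> v \<in> C \<and> E u v)"

definition is_path :: "'a set \<Rightarrow> ('a \<Rightarrow> 'a \<Rightarrow> bool) \<Rightarrow> 'a list \<Rightarrow> bool" where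
  "is_path V E p \<longleftrightarrow> p \<noteq> [] \<and> distinct p \<and> set p \<subseteq> V
     \<and> (\<forall>i. Suc i < length p \<longrightarrow> E (p ! i) (p ! Suc i))"

definition connected_graph :: "'a set \<Rightarrow> ('a \<Rightarrow> 'a \<Rightarrow> bool) \<Rightarrow> bool" where
  "connected_graph V E \<longleftrightarrow> V \<noteq> {} \<and>
     (\<forall>u\<in>V. \<forall>v\<in>V. \<exists>p. is_path V E p \<and> hd p = u \<and> last p = v)"

text \<open>Distance in G between vertex sets A and B (infinity if no path).\<close>
definition set_dist :: "'a set \<Rightarrow> ('a \<Rightarrow> 'a \<Rightarrow> bool) \<Rightarrow> 'a set \<Rightarrow> 'a set \<Rightarrow> enat" where
  "set_dist V E A B =
     (INF p \<in> {p. is_path V E p \<and> hd p \<in> A \<and> last p \<in> B}. enat (length p - 1))"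

definition closed_nbhd :: "'a set \<Rightarrow> ('a \<Rightarrow> 'a \<Rightarrow> bool) \<Rightarrow> 'a set \<Rightarrow> 'a set" where
  "closed_nbhd V E S = S \<union> {v \<in> V. \<exists>u\<in>S. E u v}"

definition bip :: "('a \<Rightarrow> 'a \<Rightarrow> bool) \<Rightarrow> 'a set \<Rightarrow> 'a set \<Rightarrow> ('a \<Rightarrow> 'a \<Rightarrow> bool)" where
  "bip E S T = (\<lambda>u v. E u v \<and> ((u \<in> S \<and> v \<in> T) \<or> (u \<in> T \<and> v \<in> S)))"

definition induced_matching :: "'a set \<Rightarrow> ('a \<Rightarrow> 'a \<Rightarrow> bool) \<Rightarrow> 'a set set \<Rightarrow> bool" where
  "induced_matching W F M \<longleftrightarrow>
     M \<subseteq> {{u, v} | u v. u \<in> W \<and> v \<in> W \<and> F u v} \<and>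
     (\<forall>e\<in>M. \<forall>e'\<in>M. e \<noteq> e' \<longrightarrow> e \<inter> e' = {} \<and> (\<forall>u\<in>e. \<forall>v\<in>e'. \<not> F u v))"

definition mim :: "'a set \<Rightarrow> ('a \<Rightarrow> 'a \<Rightarrow> bool) \<Rightarrow> nat" where
  "mim W F = Max {card M | M. induced_matching W F M}"

definition linear_layout :: "'a set \<Rightarrow> ('a \<Rightarrow> nat) \<Rightarrow> bool" where
  "linear_layout V \<sigma> \<longleftrightarrow> bij_betw \<sigma> V {1..card V}"

definition prefix_set :: "'a set \<Rightarrow> ('a \<Rightarrow> nat) \<Rightarrow> nat \<Rightarrow> 'a set" where
  "prefix_set V \<sigma> i = {v \<in> V. \<sigma> v \<le> i}"

definition mw :: "'a set \<Rightarrow> ('a \<Rightarrow> 'a \<Rightarrow> bool) \<Rightarrow> ('a \<Rightarrow> nat) \<Rightarrow> nat" where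
  "mw V E \<sigma> = Max ({0} \<union>
     {mim V (bip E (prefix_set V \<sigma> i) (V - prefix_set V \<sigma> i)) | i. 1 \<le> i \<and> i < card V})"

definition lmw :: "'a set \<Rightarrow> ('a \<Rightarrow> 'a \<Rightarrow> bool) \<Rightarrow> nat" where
  "lmw V E = Min {mw V E \<sigma> | \<sigma>. linear_layout V \<sigma>}"

end

theory Submission
  imports Defs
begin


lemma im_sub_pow: "induced_matching W F M \<Longrightarrow> M \<subseteq> Pow W"
  unfolding induced_matching_def by blast

lemma im_card_le: assumes "finite W" "induced_matching W F M" shows "card M \<le> card (Pow W)"
proof -
  have "M \<subseteq> Pow W" using im_sub_pow[OF assms(2)] .
  then show ?thesis by (rule card_mono[rotated]) (simp add: assms(1))
qed

lemma mim_ge: assumes "finite W" "induced_matching W F M" shows "card M \<le> mim W F"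
proof -
  have fin: "finite {card M |M. induced_matching W F M}"
  proof (rule finite_subset[of _ "{..card (Pow W)}"])
    show "{card M |M. induced_matching W F M} \<subseteq> {..card (Pow W)}"
      using im_card_le[OF assms(1)] by auto
  qed auto
  show ?thesis unfolding mim_def by (rule Max_ge[OF fin]) (use assms in blast)
qed

lemma mim_le: assumes "finite W" shows "mim W F \<le> card (Pow W)"
proof -
  have fin: "finite {card M |M. induced_matching W F M}"
  proof (rule finite_subset[of _ "{..card (Pow W)}"])
    show "{card M |M. induced_matching W F M} \<subseteq> {..card (Pow W)}"
      using im_card_le[OF assms(1)] by auto
  qed auto
  have ne: "{card M |M. induced_matching W F M} \<noteq> {}"
    unfolding induced_matching_def by auto
  show ?thesis unfolding mim_def using Max_in[OF fin ne] im_card_le[OF assms]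
    by auto
qed

lemma mim_obtain: assumes "finite W" shows "\<exists>M. induced_matching W F M \<and> card M = mim W F"
proof -
  have fin: "finite {card M |M. induced_matching W F M}"
  proof (rule finite_subset[of _ "{..card (Pow W)}"])
    show "{card M |M. induced_matching W F M} \<subseteq> {..card (Pow W)}"
      using im_card_le[OF assms(1)] by auto
  qed auto
  have ne: "{card M |M. induced_matching W F M} \<noteq> {}"
    unfolding induced_matching_def by auto
  show ?thesis unfolding mim_def using Max_in[OF fin ne] by auto
qed

lemma mw_fin: "finite ({0} \<union>
     {mim V (bip E (prefix_set V \<sigma> i) (V - prefix_set V \<sigma> i)) | i. 1 \<le> i \<and> i < card V})"
proof -
  have "{mim V (bip E (prefix_set V \<sigma> i) (V - prefix_set V \<sigma> i)) | i. 1 \<le> i \<and> i < card V}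
     = (\<lambda>i. mim V (bip E (prefix_set V \<sigma> i) (V - prefix_set V \<sigma> i))) ` {1..<card V}" by auto
  then show ?thesis by simp
qed

lemma mw_ge: "1 \<le> i \<Longrightarrow> i < card V \<Longrightarrow>
  mim V (bip E (prefix_set V \<sigma> i) (V - prefix_set V \<sigma> i)) \<le> mw V E \<sigma>"
  unfolding mw_def by (rule Max_ge[OF mw_fin]) blast

lemma mw_obtain: assumes "1 \<le> k" "k \<le> mw V E \<sigma>"
  shows "\<exists>i. 1 \<le> i \<and> i < card V \<and> k \<le> mim V (bip E (prefix_set V \<sigma> i) (V - prefix_set V \<sigma> i))"
proof -
  have "mw V E \<sigma> \<in> ({0} \<union>
     {mim V (bip E (prefix_set V \<sigma> i) (V - prefix_set V \<sigma> i)) | i. 1 \<le> i \<and> i < card V})"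
    unfolding mw_def by (rule Max_in[OF mw_fin]) auto
  then show ?thesis using assms by auto
qed

lemma mw_le: assumes "finite V" shows "mw V E \<sigma> \<le> card (Pow V)"
proof -
  have "mw V E \<sigma> \<in> ({0} \<union>
     {mim V (bip E (prefix_set V \<sigma> i) (V - prefix_set V \<sigma> i)) | i. 1 \<le> i \<and> i < card V})"
    unfolding mw_def by (rule Max_in[OF mw_fin]) auto
  then show ?thesis using mim_le[OF assms] by auto
qed

lemma lmw_fin: assumes "finite V" shows "finite {mw V E \<sigma> | \<sigma>. linear_layout V \<sigma>}"
  by (rule finite_subset[of _ "{..card (Pow V)}"]) (use mw_le[OF assms] in auto)

lemma layout_ex: assumes "finite V" shows "\<exists>\<sigma>. linear_layout V \<sigma>"
  unfolding linear_layout_def by (rule finite_same_card_bij) (use assms in auto)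

lemma lmw_le: assumes "finite V" "linear_layout V \<sigma>" shows "lmw V E \<le> mw V E \<sigma>"
  unfolding lmw_def by (rule Min_le[OF lmw_fin[OF assms(1)]]) (use assms in blast)

lemma lmw_obtain: assumes "finite V" shows "\<exists>\<sigma>. linear_layout V \<sigma> \<and> lmw V E = mw V E \<sigma>"
proof -
  have "lmw V E \<in> {mw V E \<sigma> | \<sigma>. linear_layout V \<sigma>}"
    unfolding lmw_def by (rule Min_in[OF lmw_fin[OF assms(1)]]) (use layout_ex[OF assms] in auto)
  then show ?thesis by auto
qed

lemma crossing: "L \<noteq> [] \<Longrightarrow> P (hd L) \<Longrightarrow> \<not> P (last L) \<Longrightarrow>
   \<exists>i. Suc i < length L \<and> P (L!i) \<and> \<not> P (L ! Suc i)"
proof (induction L)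
  case Nil then show ?case by simp
next
  case (Cons x xs)
  show ?case
  proof (cases "xs = []")
    case True then show ?thesis using Cons by simp
  next
    case False
    show ?thesis
    proof (cases "P (hd xs)")
      case True
      then obtain i where "Suc i < length xs" "P (xs!i)" "\<not> P (xs ! Suc i)"
        using Cons False by auto
      then show ?thesis by (intro exI[of _ "Suc i"]) auto
    next
      case f: False
      then show ?thesis using False Cons by (intro exI[of _ 0]) (auto simp: hd_conv_nth)
    qed
  qed
qed

lemma dist_ge: assumes "set_dist V E A B \<ge> 2" "is_path V E p" "hd p \<in> A" "last p \<in> B"
  shows "2 \<le> length p - 1"
proof -
  have "set_dist V E A B \<le> enat (length p - 1)"
    unfolding set_dist_def by (rule INF_lower) (use assms in auto)
  then have "(2::enat) \<le> enat (length p - 1)" using assms(1) by (rule order_trans[rotated])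
  then show ?thesis by (simp add: numeral_eq_enat)
qed

lemma dist_disj: assumes G: "simple_graph V E" and "A \<subseteq> V" "B \<subseteq> V" and d: "set_dist V E A B \<ge> 2"
  shows "A \<inter> closed_nbhd V E B = {}" "B \<inter> closed_nbhd V E A = {}"
proof -
  have irr: "\<And>u. \<not> E u u" and sym: "\<And>u v. E u v \<Longrightarrow> E v u" using G unfolding simple_graph_def by auto
  have AB: "A \<inter> B = {}"
  proof (rule ccontr)
    assume "A \<inter> B \<noteq> {}" then obtain x where "x \<in> A" "x \<in> B" by auto
    then have "is_path V E [x]" using assms unfolding is_path_def by auto
    from dist_ge[OF d this] \<open>x \<in> A\<close> \<open>x\<in>B\<close> show False by simp
  qed
  have edge: False if "x \<in> A" "y \<in> B" "E x y" for x y
  proof -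
    have "is_path V E [x,y]" using that assms irr unfolding is_path_def
      by (auto simp: nth_Cons split: nat.splits)
    from dist_ge[OF d this] that show False by simp
  qed
  show "A \<inter> closed_nbhd V E B = {}" using AB edge sym unfolding closed_nbhd_def by blast
  show "B \<inter> closed_nbhd V E A = {}" using AB edge sym unfolding closed_nbhd_def by blast
qed

lemma rev_path: assumes p: "is_path V E p" and sym: "\<forall>u v. E u v \<longrightarrow> E v u" shows "is_path V E (rev p)"
  unfolding is_path_def
proof (intro conjI allI impI)
  show "rev p \<noteq> []" "distinct (rev p)" "set (rev p) \<subseteq> V" using p unfolding is_path_def by auto
  fix i assume i: "Suc i < length (rev p)"
  define j where "j = length p - Suc (Suc i)"
  have j: "Suc j < length p" "length p - Suc i = Suc j" using i unfolding j_def by auto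
  have "E (p ! j) (p ! Suc j)" using p j(1) unfolding is_path_def by blast
  then have "E (p ! Suc j) (p ! j)" using sym by blast
  moreover have "rev p ! i = p ! Suc j" using i j by (simp add: rev_nth)
  moreover have "rev p ! Suc i = p ! j" using i j unfolding j_def by (simp add: rev_nth)
  ultimately show "E (rev p ! i) (rev p ! Suc i)" by simp
qed



lemma imI:
  assumes "\<And>e. e \<in> M \<Longrightarrow> \<exists>u v. e = {u,v} \<and> u \<in> W \<and> v \<in> W \<and> F u v"
    and "\<And>e e'. e \<in> M \<Longrightarrow> e' \<in> M \<Longrightarrow> e \<noteq> e' \<Longrightarrow> e \<inter> e' = {}"
    and "\<And>e e' x y. e \<in> M \<Longrightarrow> e' \<in> M \<Longrightarrow> e \<noteq> e' \<Longrightarrow> x \<in> e \<Longrightarrow> y \<in> e' \<Longrightarrow> \<not> F x y"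
  shows "induced_matching W F M"
  unfolding induced_matching_def
proof (intro conjI)
  show "M \<subseteq> {{u, v} |u v. u \<in> W \<and> v \<in> W \<and> F u v}"
  proof
    fix e assume "e \<in> M" then obtain u v where "e = {u,v} \<and> u \<in> W \<and> v \<in> W \<and> F u v" using assms(1) by blast
    then show "e \<in> {{u, v} |u v. u \<in> W \<and> v \<in> W \<and> F u v}" by blast
  qed
  show "\<forall>e\<in>M. \<forall>e'\<in>M. e \<noteq> e' \<longrightarrow> e \<inter> e' = {} \<and> (\<forall>u\<in>e. \<forall>v\<in>e'. \<not> F u v)"
  proof (intro ballI impI conjI)
    fix e e' x y assume h: "e \<in> M" "e' \<in> M" "e \<noteq> e'"
    show "e \<inter> e' = {}" by (rule assms(2)[OF h])
    fix x y assume "x \<in> e" "y \<in> e'"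
    then show "\<not> F x y" by (rule assms(3)[OF h])
  qed
qed

lemma imD1: "induced_matching W F M \<Longrightarrow> e \<in> M \<Longrightarrow> \<exists>u v. e = {u,v} \<and> u \<in> W \<and> v \<in> W \<and> F u v"
  unfolding induced_matching_def by blast
lemma imD2: "induced_matching W F M \<Longrightarrow> e \<in> M \<Longrightarrow> e' \<in> M \<Longrightarrow> e \<noteq> e' \<Longrightarrow> e \<inter> e' = {}"
  unfolding induced_matching_def by (elim conjE) (drule bspec, assumption, drule bspec, assumption, simp)
lemma imD3: "induced_matching W F M \<Longrightarrow> e \<in> M \<Longrightarrow> e' \<in> M \<Longrightarrow> e \<noteq> e' \<Longrightarrow> x \<in> e \<Longrightarrow> y \<in> e' \<Longrightarrow> \<not> F x y"
  unfolding induced_matching_def by (elim conjE) (drule bspec, assumption, drule bspec, assumption, simp)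

lemma add_edge:
  assumes G: "simple_graph V E" and s: "1 \<le> s" "s < card V"
    and IM: "induced_matching V (bip E (prefix_set V \<sigma> s) (V - prefix_set V \<sigma> s)) M"
    and MC: "\<forall>e\<in>M. e \<subseteq> C" and CV: "C \<subseteq> V"
    and uv: "u \<in> V" "v \<in> V" "u \<notin> closed_nbhd V E C" "v \<notin> closed_nbhd V E C" "E u v"
    and o: "\<sigma> u \<le> s" "s < \<sigma> v"
  shows "card M + 1 \<le> mw V E \<sigma>"
proof -
  have fV: "finite V" and sym: "\<And>x y. E x y \<Longrightarrow> E y x" using G unfolding simple_graph_def by auto
  define S where "S = prefix_set V \<sigma> s"
  have IM': "induced_matching V (bip E S (V - S)) M" using IM unfolding S_def .
  have uS: "u \<in> S" and vS: "v \<in> V - S" using uv o unfolding S_def prefix_set_def by auto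
  have uC: "u \<notin> C" "v \<notin> C" using uv unfolding closed_nbhd_def by auto
  have nadj: "\<not> E x y \<and> \<not> E y x" if "x \<in> {u,v}" "y \<in> C" for x y
  proof -
    have "x \<notin> closed_nbhd V E C" using that uv by auto
    then have "\<not> E y x" using that uv unfolding closed_nbhd_def by auto
    then show ?thesis by (blast dest: sym)
  qed
  have IM2: "induced_matching V (bip E S (V - S)) (insert {u,v} M)"
  proof (rule imI)
    fix e assume "e \<in> insert {u,v} M"
    then show "\<exists>a b. e = {a,b} \<and> a \<in> V \<and> b \<in> V \<and> bip E S (V - S) a b"
    proof
      assume "e = {u,v}" then show ?thesis using uS vS uv unfolding bip_def by auto
    next
      assume "e \<in> M" then show ?thesis using imD1[OF IM'] by blast
    qed
  next
    fix e e' assume e: "e \<in> insert {u, v} M" "e' \<in> insert {u, v} M" "e \<noteq> e'"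
    show "e \<inter> e' = {}"
    proof (cases "e = {u,v}")
      case True
      then have "e' \<subseteq> C" using MC e by auto
      then show ?thesis using True uC by auto
    next
      case False
      then have eM: "e \<in> M" using e by auto
      then have eC: "e \<subseteq> C" using MC by auto
      show ?thesis
      proof (cases "e' = {u,v}")
        case True then show ?thesis using eC uC by auto
      next
        case False then show ?thesis using imD2[OF IM' eM _ e(3)] e by auto
      qed
    qed
  next
    fix e e' x y assume e: "e \<in> insert {u, v} M" "e' \<in> insert {u, v} M" "e \<noteq> e'" "x \<in> e" "y \<in> e'"
    show "\<not> bip E S (V - S) x y"
    proof (cases "e = {u,v}")
      case True
      then have "e' \<subseteq> C" using MC e by auto
      then show ?thesis using True nadj e unfolding bip_def by auto
    next
      case False
      then have eM: "e \<in> M" using e by auto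
      then have eC: "e \<subseteq> C" using MC by auto
      show ?thesis
      proof (cases "e' = {u,v}")
        case True then show ?thesis using eC nadj e unfolding bip_def by auto
      next
        case False then show ?thesis using imD3[OF IM' eM _ e(3)] e by auto
      qed
    qed
  qed
  have "{u,v} \<notin> M" using MC uC by auto
  moreover have "finite M" by (rule finite_subset[OF im_sub_pow[OF IM]]) (simp add: fV)
  ultimately have ci: "card (insert {u,v} M) = card M + 1" by simp
  then have "card M + 1 \<le> mim V (bip E S (V - S))" using mim_ge[OF fV IM2] by simp
  also have "\<dots> \<le> mw V E \<sigma>" unfolding S_def by (rule mw_ge[OF s])
  finally show ?thesis by simp
qed


lemma cut_exists:
  assumes G: "simple_graph V E" and CV: "C \<subseteq> V" and L: "linear_layout V \<sigma>"
    and k: "1 \<le> k" "k \<le> lmw C (induced C E)"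
  shows "\<exists>s M. 1 \<le> s \<and> s < card V \<and>
     induced_matching V (bip E (prefix_set V \<sigma> s) (V - prefix_set V \<sigma> s)) M \<and>
     k \<le> card M \<and> (\<forall>e\<in>M. e \<subseteq> C) \<and> (\<exists>a\<in>C. \<sigma> a \<le> s) \<and> (\<exists>c\<in>C. s < \<sigma> c)"
proof -
  have fV: "finite V" using G unfolding simple_graph_def by auto
  have fC: "finite C" using fV CV finite_subset by auto
  have bij: "bij_betw \<sigma> V {1..card V}" using L unfolding linear_layout_def .
  have inj: "inj_on \<sigma> C" using bij CV unfolding bij_betw_def by (meson inj_on_subset)
  define \<tau> where "\<tau> v = card {w\<in>C. \<sigma> w \<le> \<sigma> v}" for v
  have mono: "\<tau> v \<le> \<tau> w \<longleftrightarrow> \<sigma> v \<le> \<sigma> w" if "v \<in> C" "w \<in> C" for v w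
  proof
    assume "\<sigma> v \<le> \<sigma> w"
    then show "\<tau> v \<le> \<tau> w" unfolding \<tau>_def by (intro card_mono) (use fC in auto)
  next
    assume a: "\<tau> v \<le> \<tau> w"
    show "\<sigma> v \<le> \<sigma> w"
    proof (rule ccontr)
      assume "\<not> \<sigma> v \<le> \<sigma> w"
      then have "{x\<in>C. \<sigma> x \<le> \<sigma> w} < {x\<in>C. \<sigma> x \<le> \<sigma> v}" using that by auto
      then have "\<tau> w < \<tau> v" unfolding \<tau>_def by (intro psubset_card_mono) (use fC in auto)
      then show False using a by simp
    qed
  qed
  have injt: "inj_on \<tau> C"
  proof (rule inj_onI)
    fix x y assume h: "x \<in> C" "y \<in> C" "\<tau> x = \<tau> y"
    have "\<sigma> x \<le> \<sigma> y" using mono[OF h(1,2)] h(3) by simp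
    moreover have "\<sigma> y \<le> \<sigma> x" using mono[OF h(2,1)] h(3) by simp
    ultimately have "\<sigma> x = \<sigma> y" by simp
    then show "x = y" using inj \<open>x \<in> C\<close> \<open>y \<in> C\<close> inj_onD by metis
  qed
  have img: "\<tau> ` C \<subseteq> {1..card C}"
  proof
    fix y assume "y \<in> \<tau> ` C"
    then obtain x where x: "x \<in> C" "y = \<tau> x" by auto
    have "finite {w\<in>C. \<sigma> w \<le> \<sigma> x}" using fC by simp
    moreover have "x \<in> {w\<in>C. \<sigma> w \<le> \<sigma> x}" using x by simp
    ultimately have "0 < card {w\<in>C. \<sigma> w \<le> \<sigma> x}" using card_gt_0_iff by blast
    then have "1 \<le> \<tau> x" unfolding \<tau>_def by simp
    moreover have "\<tau> x \<le> card C" unfolding \<tau>_def by (rule card_mono[OF fC]) auto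
    ultimately show "y \<in> {1..card C}" using x by auto
  qed
  have img2: "\<tau> ` C = {1..card C}"
    by (rule card_subset_eq) (use img card_image[OF injt] in auto)
  have Lt: "linear_layout C \<tau>" unfolding linear_layout_def bij_betw_def using injt img2 by auto
  have "k \<le> mw C (induced C E) \<tau>" using k(2) lmw_le[OF fC Lt, of "induced C E"] by linarith
  from mw_obtain[OF k(1) this] obtain j where j: "1 \<le> j" "j < card C"
    and mj: "k \<le> mim C (bip (induced C E) (prefix_set C \<tau> j) (C - prefix_set C \<tau> j))" by auto
  obtain M where IM: "induced_matching C (bip (induced C E) (prefix_set C \<tau> j) (C - prefix_set C \<tau> j)) M"
    and cM: "card M = mim C (bip (induced C E) (prefix_set C \<tau> j) (C - prefix_set C \<tau> j))"
    using mim_obtain[OF fC] by blast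
  obtain vj where vj: "vj \<in> C" "\<tau> vj = j" using img2 j by (metis atLeastAtMost_iff imageE less_imp_le)
  obtain vc where vc: "vc \<in> C" "\<tau> vc = card C" using img2 j
    by (metis atLeastAtMost_iff imageE le_trans less_imp_le order_refl)
  define s where "s = \<sigma> vj"
  have sV: "\<sigma> x \<in> {1..card V}" if "x \<in> V" for x using bij that unfolding bij_betw_def by auto
  have s1: "1 \<le> s" using sV vj CV unfolding s_def by auto
  have "\<not> \<tau> vc \<le> \<tau> vj" using vc vj j by simp
  then have "s < \<sigma> vc" using mono[OF vc(1) vj(1)] unfolding s_def by simp
  moreover have "\<sigma> vc \<le> card V" using sV vc CV by auto
  ultimately have s2: "s < card V" by simp
  define S where "S = prefix_set V \<sigma> s"
  define P where "P = prefix_set C \<tau> j"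
  have PS: "x \<in> P \<longleftrightarrow> x \<in> S" if "x \<in> C" for x
    using that mono[OF that vj(1)] CV unfolding P_def S_def prefix_set_def s_def vj(2) by auto
  have bipeq: "bip (induced C E) P (C - P) x y \<longleftrightarrow> bip E S (V - S) x y" if "x \<in> C" "y \<in> C" for x y
    using that PS CV unfolding bip_def induced_def by auto
  have MC: "\<forall>e\<in>M. e \<subseteq> C"
  proof
    fix e assume "e \<in> M"
    from imD1[OF IM this] show "e \<subseteq> C" by auto
  qed
  have IMV: "induced_matching V (bip E S (V - S)) M"
  proof (rule imI)
    fix e assume e: "e \<in> M"
    from imD1[OF IM e] obtain a b where ab: "e = {a,b}" "a \<in> C" "b \<in> C"
      "bip (induced C E) (prefix_set C \<tau> j) (C - prefix_set C \<tau> j) a b" by blast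
    then have "bip E S (V - S) a b" using bipeq[of a b] unfolding P_def by simp
    then show "\<exists>a b. e = {a,b} \<and> a \<in> V \<and> b \<in> V \<and> bip E S (V - S) a b" using ab CV by blast
  next
    fix e e' assume "e \<in> M" "e' \<in> M" "e \<noteq> e'"
    then show "e \<inter> e' = {}" by (rule imD2[OF IM])
  next
    fix e e' x y assume h: "e \<in> M" "e' \<in> M" "e \<noteq> e'" "x \<in> e" "y \<in> e'"
    have "\<not> bip (induced C E) (prefix_set C \<tau> j) (C - prefix_set C \<tau> j) x y" by (rule imD3[OF IM h])
    moreover have "x \<in> C" "y \<in> C" using MC h by auto
    ultimately show "\<not> bip E S (V - S) x y" using bipeq[of x y] unfolding P_def by simp
  qed
  show ?thesis
    apply (rule exI[of _ s], rule exI[of _ M])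
    using s1 s2 IMV mj cM MC vj vc \<open>s < \<sigma> vc\<close> unfolding S_def P_def s_def by auto
qed



lemma path_walk: "is_path W F q \<Longrightarrow> (\<And>x y. F x y \<Longrightarrow> E x y) \<Longrightarrow>
   q \<noteq> [] \<and> set q \<subseteq> W \<and> (\<forall>i. Suc i < length q \<longrightarrow> E (q!i) (q!Suc i))"
  unfolding is_path_def by blast

lemma walk_cross:
  assumes G: "simple_graph V E" and s: "1 \<le> s" "s < card V"
    and IM: "induced_matching V (bip E (prefix_set V \<sigma> s) (V - prefix_set V \<sigma> s)) M"
    and MC: "\<forall>e\<in>M. e \<subseteq> C" and CV: "C \<subseteq> V"
    and L: "L \<noteq> [] \<and> set L \<subseteq> V \<and> (\<forall>i. Suc i < length L \<longrightarrow> E (L!i) (L!Suc i))"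
    and LN: "set L \<inter> closed_nbhd V E C = {}"
    and o: "\<sigma> (hd L) \<le> s" "s < \<sigma> (last L)"
  shows "card M + 1 \<le> mw V E \<sigma>"
proof -
  obtain i where i: "Suc i < length L" "\<sigma> (L!i) \<le> s" "\<not> \<sigma> (L ! Suc i) \<le> s"
    using crossing[of L "\<lambda>x. \<sigma> x \<le> s"] L o by auto
  have inL: "L!i \<in> set L" "L!Suc i \<in> set L" using i(1) by auto
  show ?thesis
  proof (rule add_edge[OF G s IM MC CV])
    show "L ! i \<in> V" "L ! Suc i \<in> V" using inL L by auto
    show "L ! i \<notin> closed_nbhd V E C" "L ! Suc i \<notin> closed_nbhd V E C" using inL LN by auto
    show "E (L ! i) (L ! Suc i)" using L i(1) by blast
    show "\<sigma> (L ! i) \<le> s" "s < \<sigma> (L ! Suc i)" using i by auto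
  qed
qed

lemma core:
  assumes G: "simple_graph V E" and s: "1 \<le> s" "s < card V"
    and IM: "induced_matching V (bip E (prefix_set V \<sigma> s) (V - prefix_set V \<sigma> s)) M"
    and MC: "\<forall>e\<in>M. e \<subseteq> Cb" and CbV: "Cb \<subseteq> V" and kM: "k \<le> card M"
    and a0: "\<exists>a\<in>Ca. \<sigma> a \<le> sa" "sa \<le> s"
    and c0: "\<exists>c\<in>Cc. sc < \<sigma> c" "s \<le> sc"
    and CaV: "Ca \<subseteq> V" and CcV: "Cc \<subseteq> V"
    and Na: "Ca \<inter> closed_nbhd V E Cb = {}" and Nc: "Cc \<inter> closed_nbhd V E Cb = {}"
    and ca: "connected_graph Ca (induced Ca E)" and cc: "connected_graph Cc (induced Cc E)"
    and P: "\<exists>p. is_path V E p \<and> hd p \<in> Ca \<and> last p \<in> Cc \<and> set p \<inter> closed_nbhd V E Cb = {}"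
  shows "k + 1 \<le> mw V E \<sigma>"
proof -
  obtain a where a: "a \<in> Ca" "\<sigma> a \<le> s" using a0 by auto
  obtain c where c: "c \<in> Cc" "s < \<sigma> c" using c0 by force
  obtain p where p: "is_path V E p" "hd p \<in> Ca" "last p \<in> Cc" "set p \<inter> closed_nbhd V E Cb = {}"
    using P by blast
  obtain q where q: "is_path Ca (induced Ca E) q" "hd q = a" "last q = hd p"
    using ca a(1) p(2) unfolding connected_graph_def by blast
  obtain r where r: "is_path Cc (induced Cc E) r" "hd r = last p" "last r = c"
    using cc c(1) p(3) unfolding connected_graph_def by blast
  have indE: "\<And>W x y. induced W E x y \<Longrightarrow> E x y" unfolding induced_def by blast
  have pw: "p \<noteq> [] \<and> set p \<subseteq> V \<and> (\<forall>i. Suc i < length p \<longrightarrow> E (p!i) (p!Suc i))"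
    using path_walk[OF p(1), of E] by blast
  have qw: "q \<noteq> [] \<and> set q \<subseteq> Ca \<and> (\<forall>i. Suc i < length q \<longrightarrow> E (q!i) (q!Suc i))"
    using path_walk[OF q(1), of E] indE by blast
  have rw: "r \<noteq> [] \<and> set r \<subseteq> Cc \<and> (\<forall>i. Suc i < length r \<longrightarrow> E (r!i) (r!Suc i))"
    using path_walk[OF r(1), of E] indE by blast
  have "card M + 1 \<le> mw V E \<sigma>"
  proof (cases "s < \<sigma> (hd p)")
    case True
    show ?thesis
    proof (rule walk_cross[OF G s IM MC CbV])
      show "q \<noteq> [] \<and> set q \<subseteq> V \<and> (\<forall>i. Suc i < length q \<longrightarrow> E (q!i) (q!Suc i))"
        using qw CaV by blast
      show "set q \<inter> closed_nbhd V E Cb = {}" using qw Na by blast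
      show "\<sigma> (hd q) \<le> s" "s < \<sigma> (last q)" using a q True by auto
    qed
  next
    case F1: False
    show ?thesis
    proof (cases "s < \<sigma> (last p)")
      case True
      show ?thesis
      proof (rule walk_cross[OF G s IM MC CbV pw p(4)])
        show "\<sigma> (hd p) \<le> s" "s < \<sigma> (last p)" using F1 True by auto
      qed
    next
      case False
      show ?thesis
      proof (rule walk_cross[OF G s IM MC CbV])
        show "r \<noteq> [] \<and> set r \<subseteq> V \<and> (\<forall>i. Suc i < length r \<longrightarrow> E (r!i) (r!Suc i))"
          using rw CcV by blast
        show "set r \<inter> closed_nbhd V E Cb = {}" using rw Nc by blast
        show "\<sigma> (hd r) \<le> s" "s < \<sigma> (last r)" using c r False by auto
      qed
    qed
  qed
  then show ?thesis using kM by linarith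
qed



theorem lemma3:
  fixes V :: "'a set" and E :: "'a \<Rightarrow> 'a \<Rightarrow> bool" and C1 C2 C3 :: "'a set"
  assumes G: "simple_graph V E"
    and sub: "C1 \<subseteq> V" "C2 \<subseteq> V" "C3 \<subseteq> V"
    and ne: "C1 \<noteq> {}" "C2 \<noteq> {}" "C3 \<noteq> {}"
    and conn: "connected_graph C1 (induced C1 E)" "connected_graph C2 (induced C2 E)"
              "connected_graph C3 (induced C3 E)"
    and dist: "set_dist V E C1 C2 \<ge> 2" "set_dist V E C1 C3 \<ge> 2" "set_dist V E C2 C3 \<ge> 2"
    and P12: "\<exists>p. is_path V E p \<and> hd p \<in> C1 \<and> last p \<in> C2 \<and> set p \<inter> closed_nbhd V E C3 = {}"
    and P13: "\<exists>p. is_path V E p \<and> hd p \<in> C1 \<and> last p \<in> C3 \<and> set p \<inter> closed_nbhd V E C2 = {}"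
    and P23: "\<exists>p. is_path V E p \<and> hd p \<in> C2 \<and> last p \<in> C3 \<and> set p \<inter> closed_nbhd V E C1 = {}"
  shows "lmw V E > min (lmw C1 (induced C1 E)) (min (lmw C2 (induced C2 E)) (lmw C3 (induced C3 E)))"
proof -
  define k where "k = min (lmw C1 (induced C1 E)) (min (lmw C2 (induced C2 E)) (lmw C3 (induced C3 E)))"
  have fV: "finite V" and sym: "\<forall>u v. E u v \<longrightarrow> E v u" using G unfolding simple_graph_def by auto
  obtain \<sigma> where L: "linear_layout V \<sigma>" and lm: "lmw V E = mw V E \<sigma>" using lmw_obtain[OF fV] by blast
  have bij: "bij_betw \<sigma> V {1..card V}" using L unfolding linear_layout_def .
  have sV: "\<sigma> x \<in> {1..card V}" if "x \<in> V" for x using bij that unfolding bij_betw_def by auto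
  have "k + 1 \<le> mw V E \<sigma>"
  proof (cases "k = 0")
    case True
    obtain p where p: "is_path V E p" "hd p \<in> C1" "last p \<in> C2" using P12 by blast
    have len: "2 \<le> length p - 1" using dist_ge[OF dist(1) p] .
    have pw: "p \<noteq> [] \<and> set p \<subseteq> V \<and> (\<forall>i. Suc i < length p \<longrightarrow> E (p!i) (p!Suc i))"
      using path_walk[OF p(1), of E] by blast
    define u where "u = p ! 0"
    define v where "v = p ! 1"
    have uvE: "E u v" using pw len unfolding u_def v_def by auto
    have uvV: "u \<in> V" "v \<in> V" using pw len unfolding u_def v_def
      by (auto intro!: subsetD[of "set p" V] nth_mem)
    have uv: "u \<noteq> v" using G uvE unfolding simple_graph_def by auto
    have neq: "\<sigma> u \<noteq> \<sigma> v" using bij uvV uv unfolding bij_betw_def inj_on_def by blast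
    have IM0: "induced_matching V F {}" for F by (rule imI) auto
    have N0: "closed_nbhd V E {} = {}" unfolding closed_nbhd_def by auto
    have "card ({}::'a set set) + 1 \<le> mw V E \<sigma>"
    proof (cases "\<sigma> u < \<sigma> v")
      case True
      show ?thesis
      proof (rule walk_cross[OF G _ _ IM0, of "\<sigma> u" "{}" "[u,v]"])
        show "1 \<le> \<sigma> u" using sV uvV by auto
        show "\<sigma> u < card V" using sV[OF uvV(2)] True by auto
        show "\<forall>e\<in>{}. e \<subseteq> {}" "{} \<subseteq> V" by auto
        show "[u, v] \<noteq> [] \<and> set [u, v] \<subseteq> V \<and> (\<forall>i. Suc i < length [u, v] \<longrightarrow> E ([u, v] ! i) ([u, v] ! Suc i))"
          using uvV uvE by auto
        show "set [u, v] \<inter> closed_nbhd V E {} = {}" using N0 by auto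
        show "\<sigma> (hd [u, v]) \<le> \<sigma> u" "\<sigma> u < \<sigma> (last [u, v])" using True by auto
      qed
    next
      case False
      then have F: "\<sigma> v < \<sigma> u" using neq by auto
      show ?thesis
      proof (rule walk_cross[OF G _ _ IM0, of "\<sigma> v" "{}" "[v,u]"])
        show "1 \<le> \<sigma> v" using sV uvV by auto
        show "\<sigma> v < card V" using sV[OF uvV(1)] F by auto
        show "\<forall>e\<in>{}. e \<subseteq> {}" "{} \<subseteq> V" by auto
        show "[v, u] \<noteq> [] \<and> set [v, u] \<subseteq> V \<and> (\<forall>i. Suc i < length [v, u] \<longrightarrow> E ([v, u] ! i) ([v, u] ! Suc i))"
          using uvV uvE sym by auto
        show "set [v, u] \<inter> closed_nbhd V E {} = {}" using N0 by auto
        show "\<sigma> (hd [v, u]) \<le> \<sigma> v" "\<sigma> v < \<sigma> (last [v, u])" using F by auto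
      qed
    qed
    then show ?thesis using True by simp
  next
    case False
    then have k1: "1 \<le> k" by simp
    have k1': "k \<le> lmw C1 (induced C1 E)" "k \<le> lmw C2 (induced C2 E)" "k \<le> lmw C3 (induced C3 E)"
      unfolding k_def by auto
    obtain s1 M1 where c1: "1 \<le> s1" "s1 < card V"
      "induced_matching V (bip E (prefix_set V \<sigma> s1) (V - prefix_set V \<sigma> s1)) M1"
      "k \<le> card M1" "\<forall>e\<in>M1. e \<subseteq> C1" "\<exists>a\<in>C1. \<sigma> a \<le> s1" "\<exists>c\<in>C1. s1 < \<sigma> c"
      using cut_exists[OF G sub(1) L k1 k1'(1)] by blast
    obtain s2 M2 where c2: "1 \<le> s2" "s2 < card V"
      "induced_matching V (bip E (prefix_set V \<sigma> s2) (V - prefix_set V \<sigma> s2)) M2"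
      "k \<le> card M2" "\<forall>e\<in>M2. e \<subseteq> C2" "\<exists>a\<in>C2. \<sigma> a \<le> s2" "\<exists>c\<in>C2. s2 < \<sigma> c"
      using cut_exists[OF G sub(2) L k1 k1'(2)] by blast
    obtain s3 M3 where c3: "1 \<le> s3" "s3 < card V"
      "induced_matching V (bip E (prefix_set V \<sigma> s3) (V - prefix_set V \<sigma> s3)) M3"
      "k \<le> card M3" "\<forall>e\<in>M3. e \<subseteq> C3" "\<exists>a\<in>C3. \<sigma> a \<le> s3" "\<exists>c\<in>C3. s3 < \<sigma> c"
      using cut_exists[OF G sub(3) L k1 k1'(3)] by blast
    note d12 = dist_disj[OF G sub(1) sub(2) dist(1)]
    note d13 = dist_disj[OF G sub(1) sub(3) dist(2)]
    note d23 = dist_disj[OF G sub(2) sub(3) dist(3)]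
    have revP: "\<exists>p. is_path V E p \<and> hd p \<in> B \<and> last p \<in> A \<and> set p \<inter> N = {}"
      if h: "\<exists>p. is_path V E p \<and> hd p \<in> A \<and> last p \<in> B \<and> set p \<inter> N = {}" for A B N
    proof -
      obtain p where "is_path V E p" "hd p \<in> A" "last p \<in> B" "set p \<inter> N = {}" using h by blast
      moreover have "p \<noteq> []" using \<open>is_path V E p\<close> unfolding is_path_def by blast
      ultimately show ?thesis using rev_path[OF _ sym] by (intro exI[of _ "rev p"]) (auto simp: hd_rev last_rev)
    qed
    note P21 = revP[OF P12] and P31 = revP[OF P13] and P32 = revP[OF P23]
    consider "s1 \<le> s2" "s2 \<le> s3" | "s1 \<le> s3" "s3 \<le> s2" | "s2 \<le> s1" "s1 \<le> s3"
      | "s2 \<le> s3" "s3 \<le> s1" | "s3 \<le> s1" "s1 \<le> s2" | "s3 \<le> s2" "s2 \<le> s1" by linarith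
    then show ?thesis
    proof cases
      case 1 show ?thesis
        by (rule core[OF G c2(1-3) c2(5) sub(2) c2(4) c1(6) 1(1) c3(7) 1(2) sub(1) sub(3) d12(1) d23(2) conn(1) conn(3) P13])
    next
      case 2 show ?thesis
        by (rule core[OF G c3(1-3) c3(5) sub(3) c3(4) c1(6) 2(1) c2(7) 2(2) sub(1) sub(2) d13(1) d23(1) conn(1) conn(2) P12])
    next
      case 3 show ?thesis
        by (rule core[OF G c1(1-3) c1(5) sub(1) c1(4) c2(6) 3(1) c3(7) 3(2) sub(2) sub(3) d12(2) d13(2) conn(2) conn(3) P23])
    next
      case 4 show ?thesis
        by (rule core[OF G c3(1-3) c3(5) sub(3) c3(4) c2(6) 4(1) c1(7) 4(2) sub(2) sub(1) d23(1) d13(1) conn(2) conn(1) P21])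
    next
      case 5 show ?thesis
        by (rule core[OF G c1(1-3) c1(5) sub(1) c1(4) c3(6) 5(1) c2(7) 5(2) sub(3) sub(2) d13(2) d12(2) conn(3) conn(2) P32])
    next
      case 6 show ?thesis
        by (rule core[OF G c2(1-3) c2(5) sub(2) c2(4) c3(6) 6(1) c1(7) 6(2) sub(3) sub(1) d23(2) d12(1) conn(3) conn(1) P31])
    qed
  qed
  then show ?thesis using lm unfolding k_def by simp
qed


end
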